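(* Let $k=\delta n$ with $\delta = \omega(\log^{-1/3} n)$, let $G=(X\dot\cup Y,E)$ be a $k$-regular bipartite graph on $2n$ vertices, let $(S,T)$ be a cut of $G$, and let $G_1\sim G(p_1)$ with $p_1 = \frac{\log n - \log\log\log\log n}{k}$. W.v.h.p. the following holds: if $A\subseteq V$ is a partite set with $|A|\le n^{0.9}$ such that every $x\in A$ satisfies $\deg^{\mathrm{Par}}_{G_1}(x)\ge \frac{1}{1000}\log n$, then $A$ has at least $|A|\cdot\frac{1}{2000}\log n$ parallel neighbors in $G_1$.
   Context: $V=X\cup Y$. A set $A$ is partite if $A\subseteq X$ or $A\subseteq Y$. A cut is a pair $(S,T)$ with $S\subseteq X$, $T\subseteq Y$; cross edges w.r.t. $(S,T)$ are edges joining $S$ to $Y\setminus T$ or $X\setminus S$ to $T$, and all other edges are parallel. $\deg^{\mathrm{Par}}_{G_1}(x)$ is the number of parallel edges of $G_1$ incident to $x$; a parallel neighbor of $A$ in $G_1$ is a vertex joined to some vertex of $A$ by a parallel edge of $G_1$. $G(p)$ retains each edge of $G$ independently with probability $p$. A sequence of events $A_n$ holds with very high probability (w.v.h.p.) if $\log(\mathbb P[A_n^c])=-\Omega(\log n)$. *)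

theory Defs
  imports "HOL-Probability.Probability"
begin

definition bip_regular :: "'v set \<Rightarrow> 'v set \<Rightarrow> ('v \<times> 'v) set \<Rightarrow> nat \<Rightarrow> bool" where
  "bip_regular X Y E k \<longleftrightarrow> finite X \<and> finite Y \<and> X \<inter> Y = {} \<and> E \<subseteq> X \<times> Y \<and>
     (\<forall>x\<in>X. card {y. (x, y) \<in> E} = k) \<and> (\<forall>y\<in>Y. card {x. (x, y) \<in> E} = k)"

definition cross_edge :: "'v set \<Rightarrow> 'v set \<Rightarrow> 'v \<times> 'v \<Rightarrow> bool" where
  "cross_edge S T e \<longleftrightarrow> (fst e \<in> S \<and> snd e \<notin> T) \<or> (fst e \<notin> S \<and> snd e \<in> T)"

definition parallel_edge :: "'v set \<Rightarrow> 'v set \<Rightarrow> 'v \<times> 'v \<Rightarrow> bool" where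
  "parallel_edge S T e \<longleftrightarrow> \<not> cross_edge S T e"

definition par_deg :: "'v set \<Rightarrow> 'v set \<Rightarrow> ('v \<times> 'v) set \<Rightarrow> 'v \<Rightarrow> nat" where
  "par_deg S T G1 v = card {e \<in> G1. parallel_edge S T e \<and> (fst e = v \<or> snd e = v)}"

definition par_neighbors :: "'v set \<Rightarrow> 'v set \<Rightarrow> ('v \<times> 'v) set \<Rightarrow> 'v set \<Rightarrow> 'v set" where
  "par_neighbors S T G1 A =
     {w. \<exists>a\<in>A. \<exists>e\<in>G1. parallel_edge S T e \<and> (e = (a, w) \<or> e = (w, a))}"

definition random_subgraph :: "('v \<times> 'v) set \<Rightarrow> real \<Rightarrow> ('v \<times> 'v) set pmf" where
  "random_subgraph E p = map_pmf (\<lambda>f. {e \<in> E. f e}) (Pi_pmf E False (\<lambda>_. bernoulli_pmf p))"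

end

theory Submission
  imports Defs "HOL-Real_Asymp.Real_Asymp"
begin

lemma binom_le_pow_fact: "real (N choose j) \<le> real N ^ j / fact j"
proof (induction j arbitrary: N)
  case 0 then show ?case by simp
next
  case (Suc j)
  show ?case
  proof (cases N)
    case 0 then show ?thesis by simp
  next
    case (Suc N')
    have "Suc j * (Suc N' choose Suc j) = Suc N' * (N' choose j)" by (rule Suc_times_binomial)
    then have eq: "real (Suc j) * real (Suc N' choose Suc j) = real (Suc N') * real (N' choose j)"
      by (simp only: of_nat_mult[symmetric])
    have "real (N' choose j) \<le> real N' ^ j / fact j" by (rule Suc.IH)
    also have "\<dots> \<le> real (Suc N') ^ j / fact j"
      by (intro divide_right_mono power_mono) auto
    finally have "real (Suc N') * real (N' choose j) \<le> real (Suc N') * (real (Suc N') ^ j / fact j)"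
      by (intro mult_left_mono) auto
    then have le: "real (Suc j) * real (Suc N' choose Suc j) \<le> real (Suc N') ^ Suc j / fact j"
      unfolding eq by simp
    have pos: "real (Suc j) > 0" by simp
    have "real (Suc N' choose Suc j) = (real (Suc j) * real (Suc N' choose Suc j)) / real (Suc j)"
      using pos by simp
    also have "\<dots> \<le> (real (Suc N') ^ Suc j / fact j) / real (Suc j)"
      using le pos by (intro divide_right_mono) auto
    also have "\<dots> = real (Suc N') ^ Suc j / fact (Suc j)"
      by (simp add: fact_Suc mult.commute)
    finally show ?thesis using Suc by simp
  qed
qed

lemma pow_le_exp_fact: "real j ^ j \<le> exp (real j) * fact j"
proof (induction j)
  case 0 then show ?case by simp
next
  case (Suc j)
  have key: "real (Suc j) ^ j \<le> exp 1 * real j ^ j"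
  proof (cases "j = 0")
    case True then show ?thesis by simp
  next
    case False
    then have jp: "real j > 0" by simp
    have "real (Suc j) = real j * (1 + 1 / real j)" using jp by (simp add: field_simps)
    then have "real (Suc j) ^ j = (real j * (1 + 1 / real j)) ^ j" by simp
    also have "\<dots> = real j ^ j * (1 + 1 / real j) ^ j" by (simp add: power_mult_distrib)
    also have "(1 + 1 / real j) ^ j \<le> exp (1 / real j) ^ j"
      by (intro power_mono) (auto simp: exp_ge_add_one_self add.commute)
    also have "exp (1 / real j) ^ j = exp 1" using jp by (simp add: exp_of_nat_mult[symmetric])
    finally show ?thesis using jp by (simp add: mult.commute)
  qed
  have "real (Suc j) ^ Suc j = real (Suc j) * real (Suc j) ^ j" by simp
  also have "\<dots> \<le> real (Suc j) * (exp 1 * (exp (real j) * fact j))"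
    using key Suc.IH by (intro mult_left_mono order.trans[OF key] mult_left_mono) auto
  also have "\<dots> = exp (real (Suc j)) * fact (Suc j)"
    by (simp add: exp_add[symmetric] fact_Suc algebra_simps)
  finally show ?case .
qed

lemma pow_div_fact_le: fixes x :: real assumes "x \<ge> 0" "j \<ge> 1"
  shows "x ^ j / fact j \<le> (exp 1 * x / real j) ^ j"
proof -
  have jp: "real j > 0" using assms by simp
  have "fact j \<ge> real j ^ j / exp (real j)" using pow_le_exp_fact[of j]
    by (simp add: divide_le_eq mult.commute)
  have "x ^ j / fact j \<le> x ^ j / (real j ^ j / exp (real j))"
    using \<open>fact j \<ge> _\<close> jp assms by (intro divide_left_mono) auto
  also have "\<dots> = (exp 1 * x / real j) ^ j"
    using jp by (simp add: power_mult_distrib power_divide exp_of_nat_mult[symmetric] field_simps)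
  finally show ?thesis .
qed

lemma prob_subset_le:
  assumes E: "finite E" and p: "0 \<le> p" "p \<le> 1" and F: "finite F"
  shows "measure_pmf.prob (random_subgraph E p) {G. F \<subseteq> G} \<le> p ^ card F"
proof (cases "F \<subseteq> E")
  case False
  have "(\<lambda>f. {e \<in> E. f e}) -` {G. F \<subseteq> G} = {}" using False by auto
  then show ?thesis unfolding random_subgraph_def measure_map_pmf using p by simp
next
  case True
  define B where "B = (\<lambda>e. if e \<in> F then {True} else (UNIV :: bool set))"
  have "(\<lambda>f. {e \<in> E. f e}) -` {G. F \<subseteq> G} = Pi E B"
    using True by (auto simp: B_def Pi_def split: if_splits)
  then have "measure_pmf.prob (random_subgraph E p) {G. F \<subseteq> G} =
      (\<Prod>e\<in>E. measure_pmf.prob (bernoulli_pmf p) (B e))"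
    unfolding random_subgraph_def measure_map_pmf using E by (simp add: measure_Pi_pmf_Pi)
  also have "\<dots> = (\<Prod>e\<in>E. if e \<in> F then p else 1)"
    using p by (intro prod.cong) (auto simp: B_def measure_pmf_single)
  also have "\<dots> = p ^ card F"
    using True E by (simp add: prod.If_cases Int_absorb1)
  finally show ?thesis by simp
qed


lemma term_bound:
  fixes n a :: nat and L p kk :: real
  assumes n2: "n \<ge> 2" and L: "L = ln (real n)" "L \<ge> 400000" and a1: "a \<ge> 1"
    and aK: "real a \<le> real n powr (9/10)"
    and p: "0 \<le> p" "p \<le> L / kk" and kk: "kk > 0"
    and H1: "exp 1 * real n powr (9/10) * L / kk \<le> 1"
    and H2: "8000 * exp 1 ^ 3 * real n powr (19/10) * L / kk^2 \<le> real n powr (-1/20)"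
  defines "c \<equiv> nat \<lfloor>real a * L / 2000\<rfloor>" and "m \<equiv> nat \<lceil>real a * L / 1000\<rceil>"
  shows "real (2*n choose a) * real (2*n choose c) * ((real (2*a*c))^m / fact m) * p^m
           \<le> real n powr (-3)"
proof -
  have ap: "real a \<ge> 1" using a1 by simp
  have "real a * L \<ge> 1 * L" using ap L(2) by (intro mult_right_mono) auto
  then have aL: "real a * L \<ge> 400000" using L(2) by linarith
  have fl0: "\<lfloor>real a * L / 2000\<rfloor> \<ge> 0" using aL by simp
  have c_le: "real c \<le> real a * L / 2000"
  proof -
    have "real_of_int \<lfloor>real a * L / 2000\<rfloor> \<le> real a * L / 2000" by (rule of_int_floor_le)
    then show ?thesis unfolding c_def using fl0 by simp
  qed
  have c_ge: "real c \<ge> real a * L / 4000"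
  proof -
    have "real_of_int \<lfloor>real a * L / 2000\<rfloor> \<ge> real a * L / 2000 - 1" by linarith
    moreover have "\<lfloor>real a * L / 2000\<rfloor> \<ge> 0" using aL by simp
    moreover have "real c = real_of_int \<lfloor>real a * L / 2000\<rfloor>" using fl0 c_def by simp
    ultimately show ?thesis using aL by linarith
  qed
  have c1: "c \<ge> 1" using c_ge aL by simp
  have m_ge: "real m \<ge> real a * L / 1000" unfolding m_def by linarith
  have cm: "2 * c \<le> m" using c_le m_ge by linarith
  have m1: "m \<ge> 1" using cm c1 by simp
  have np: "real n > 0" "real n \<ge> 2" using n2 by auto
  define \<rho> where "\<rho> = exp 1 * real a * p"
  have \<rho>0: "\<rho> \<ge> 0" using p by (simp add: \<rho>_def)
  have Lpos: "L > 0" using L by simp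
  have "\<rho> \<le> exp 1 * real n powr (9/10) * (L / kk)" unfolding \<rho>_def
    using aK p by (intro mult_mono) auto
  then have \<rho>1: "\<rho> \<le> 1" using H1 by simp
  have T1: "real (2*n choose a) \<le> real n ^ (2*a)"
  proof -
    have "real (2*n choose a) \<le> real (2*n) ^ a / fact a" by (rule binom_le_pow_fact)
    also have "\<dots> \<le> real (2*n) ^ a / 1"
      by (intro divide_left_mono) (auto intro: fact_ge_1)
    also have "\<dots> \<le> (real n * real n) ^ a"
    proof -
      have "real (2*n) \<le> real n * real n" using np by (simp add: mult_right_mono)
      then show ?thesis unfolding div_by_1 by (intro power_mono) auto
    qed
    also have "\<dots> = real n ^ (2*a)" by (simp add: power_mult power2_eq_square)
    finally show ?thesis .
  qed
  have T2: "real (2*n choose c) \<le> (exp 1 * real (2*n) / real c) ^ c"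
    by (rule order.trans[OF binom_le_pow_fact pow_div_fact_le]) (use c1 in auto)
  have T3: "(real (2*a*c))^m / fact m * p^m \<le> \<rho> ^ (2*c)"
  proof -
    have s1: "(real (2*a*c))^m / fact m \<le> (exp 1 * real (2*a*c) / real m) ^ m"
      by (rule pow_div_fact_le) (use m1 in auto)
    have "real (2*c) \<le> real m" using cm by linarith
    then have "real a * real (2*c) \<le> real a * real m" by (intro mult_left_mono) auto
    then have "real (2*a*c) \<le> real a * real m" by (simp add: mult.assoc mult.left_commute)
    then have "exp 1 * real (2*a*c) \<le> exp 1 * real a * real m" by simp
    then have s2: "exp 1 * real (2*a*c) / real m \<le> exp 1 * real a" using m1 by (simp add: divide_le_eq)
    have s3: "(exp 1 * real (2*a*c) / real m) ^ m \<le> (exp 1 * real a) ^ m"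
      by (rule power_mono[OF s2]) simp
    have s4: "(real (2*a*c))^m / fact m \<le> (exp 1 * real a) ^ m" using s1 s3 by (rule order.trans)
    have s5: "(real (2*a*c))^m / fact m * p^m \<le> (exp 1 * real a) ^ m * p ^ m"
      by (rule mult_right_mono[OF s4]) (use p in simp)
    have s6: "(exp 1 * real a) ^ m * p ^ m = \<rho> ^ m" unfolding \<rho>_def by (rule power_mult_distrib[symmetric])
    have s7: "\<rho> ^ m \<le> \<rho> ^ (2*c)" by (rule power_decreasing) (use cm \<rho>0 \<rho>1 in auto)
    show ?thesis using s5 s6 s7 by linarith
  qed
  have base: "exp 1 * real (2*n) / real c * \<rho>^2 \<le> real n powr (-1/20)"
  proof -
    have cpos: "real c > 0" using c1 by simp
    have "exp 1 * real (2*n) / real c * \<rho>^2 = 2 * exp 1 ^ 3 * real n * real a ^ 2 * p ^ 2 / real c"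
      by (simp add: \<rho>_def power2_eq_square power3_eq_cube)
    also have "\<dots> \<le> 2 * exp 1 ^ 3 * real n * real a ^ 2 * p ^ 2 / (real a * L / 4000)"
      using c_ge aL by (intro divide_left_mono) (auto simp: p intro!: mult_pos_pos)
    also have "\<dots> = 8000 * exp 1 ^ 3 * real n * real a * p ^ 2 / L"
      using ap Lpos by (simp add: power2_eq_square field_simps)
    also have "\<dots> \<le> 8000 * exp 1 ^ 3 * real n * real n powr (9/10) * (L / kk) ^ 2 / L"
      using aK p Lpos by (intro divide_right_mono mult_mono power_mono) auto
    also have "\<dots> = 8000 * exp 1 ^ 3 * (real n * real n powr (9/10)) * L / kk ^ 2"
      using Lpos by (simp add: power2_eq_square field_simps)
    also have "real n * real n powr (9/10) = real n powr (19/10)"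
    proof -
      have "real n * real n powr (9/10) = real n powr 1 * real n powr (9/10)" using np by simp
      also have "\<dots> = real n powr (1 + 9/10)" by (rule powr_add[symmetric])
      finally show ?thesis by simp
    qed
    finally show ?thesis using H2 by simp
  qed
  have "real (2*n choose a) * real (2*n choose c) * ((real (2*a*c))^m / fact m) * p^m
        = real (2*n choose a) * (real (2*n choose c) * ((real (2*a*c))^m / fact m * p^m))"
    by simp
  also have "\<dots> \<le> real n ^ (2*a) * ((exp 1 * real (2*n) / real c) ^ c * \<rho> ^ (2*c))"
    using T1 T2 T3 p(1) by (intro mult_mono) auto
  also have "real n ^ (2*a) * ((exp 1 * real (2*n) / real c) ^ c * \<rho> ^ (2*c))
      = real n ^ (2*a) * (exp 1 * real (2*n) / real c * \<rho>^2) ^ c"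
    by (simp only: power_mult power_mult_distrib)
  also have "\<dots> \<le> real n ^ (2*a) * (real n powr (-1/20)) ^ c"
    using base \<rho>0 by (intro mult_left_mono power_mono) auto
  also have "\<dots> = real n powr (real (2*a) - real c / 20)"
  proof -
    have "real n ^ (2*a) = real n powr (real (2*a))" by (rule powr_realpow[symmetric]) (use np in auto)
    moreover have "(real n powr (-1/20)) ^ c = real n powr (real c * (-1/20))"
      by (rule powr_power) (use np in auto)
    moreover have "real (2*a) - real c / 20 = real (2*a) + real c * (-1/20)" by simp
    ultimately show ?thesis by (simp only: powr_add)
  qed
  also have "\<dots> \<le> real n powr (-3)"
  proof -
    have q1: "real c / 20 \<ge> real a * L / 80000" using c_ge by linarith
    have "real a * L \<ge> real a * 400000" using L(2) ap by (intro mult_left_mono) auto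
    then have q2: "real a * L / 80000 \<ge> 5 * real a" by simp
    have ex: "real (2*a) - real c / 20 \<le> -3" using q1 q2 ap by linarith
    show ?thesis by (rule powr_mono[OF ex]) (use np in auto)
  qed
  finally show ?thesis .
qed


lemma card_family:
  fixes V :: "'a set" and a c m :: nat
  assumes V: "finite V"
  defines "Fam \<equiv> {F. \<exists>A W. A \<subseteq> V \<and> card A = a \<and> W \<subseteq> V \<and> card W = c \<and>
                     F \<subseteq> A \<times> W \<union> W \<times> A \<and> card F = m}"
  shows "finite Fam \<and> real (card Fam) \<le> real (card V choose a) * real (card V choose c) * (real (2*a*c) ^ m / fact m)"
proof -
  define SA where "SA = {A. A \<subseteq> V \<and> card A = a}"
  define SW where "SW = {W. W \<subseteq> V \<and> card W = c}"
  define SF where "SF = (\<lambda>A W :: 'a set. {F. F \<subseteq> A \<times> W \<union> W \<times> A \<and> card F = m})"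
  have finSA: "finite SA" unfolding SA_def by (rule finite_subset[of _ "Pow V"]) (use V in auto)
  have finSW: "finite SW" unfolding SW_def by (rule finite_subset[of _ "Pow V"]) (use V in auto)
  have finSF: "finite (SF A W)" if "A \<in> SA" "W \<in> SW" for A W
  proof -
    have "finite (A \<times> W \<union> W \<times> A)" using that V unfolding SA_def SW_def
      by (auto intro: finite_subset)
    then have "finite (Pow (A \<times> W \<union> W \<times> A))" by simp
    then show ?thesis unfolding SF_def by (rule finite_subset[rotated]) auto
  qed
  have sub: "Fam \<subseteq> (\<Union>A\<in>SA. \<Union>W\<in>SW. SF A W)"
    unfolding Fam_def SA_def SW_def SF_def by blast
  have finU: "finite (\<Union>A\<in>SA. \<Union>W\<in>SW. SF A W)" using finSA finSW finSF by blast
  have cardSF: "real (card (SF A W)) \<le> real (2*a*c) ^ m / fact m" if "A \<in> SA" "W \<in> SW" for A W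
  proof -
    have fA: "finite A" and fW: "finite W" using that V unfolding SA_def SW_def by (auto intro: finite_subset)
    have "card (SF A W) = card (A \<times> W \<union> W \<times> A) choose m"
      unfolding SF_def by (rule n_subsets) (use fA fW in auto)
    moreover have "card (A \<times> W \<union> W \<times> A) \<le> 2*a*c"
    proof -
      have "card (A \<times> W \<union> W \<times> A) \<le> card (A \<times> W) + card (W \<times> A)" by (rule card_Un_le)
      also have "\<dots> = 2*a*c" using that unfolding SA_def SW_def by (simp add: card_cartesian_product)
      finally show ?thesis .
    qed
    ultimately show ?thesis
      using binom_le_pow_fact[of "card (A \<times> W \<union> W \<times> A)" m]
      by (smt (verit) divide_right_mono fact_ge_zero of_nat_0_le_iff of_nat_mono power_mono)
  qed
  have "card Fam \<le> card (\<Union>A\<in>SA. \<Union>W\<in>SW. SF A W)" using sub finU by (rule card_mono[rotated])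
  also have "\<dots> \<le> (\<Sum>A\<in>SA. card (\<Union>W\<in>SW. SF A W))" using finSA by (rule card_UN_le)
  also have "\<dots> \<le> (\<Sum>A\<in>SA. \<Sum>W\<in>SW. card (SF A W))"
    by (rule sum_mono, rule card_UN_le[OF finSW])
  finally have "real (card Fam) \<le> real (\<Sum>A\<in>SA. \<Sum>W\<in>SW. card (SF A W))"
    by (rule of_nat_mono)
  also have "\<dots> = (\<Sum>A\<in>SA. \<Sum>W\<in>SW. real (card (SF A W)))" by (simp add: of_nat_sum)
  also have "\<dots> \<le> (\<Sum>A\<in>SA. \<Sum>W\<in>SW. real (2*a*c) ^ m / fact m)"
    using cardSF by (intro sum_mono) auto
  also have "\<dots> = real (card SA) * real (card SW) * (real (2*a*c) ^ m / fact m)" by simp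
  also have "card SA = card V choose a" unfolding SA_def by (rule n_subsets[OF V])
  also have "card SW = card V choose c" unfolding SW_def by (rule n_subsets[OF V])
  finally show ?thesis using finite_subset[OF sub finU] by simp
qed

lemma extend_subset:
  assumes "finite V" "N \<subseteq> V" "card N \<le> c" "c \<le> card V"
  obtains W where "N \<subseteq> W" "W \<subseteq> V" "card W = c"
proof -
  have fN: "finite N" using assms finite_subset by blast
  have "card (V - N) = card V - card N" using assms fN by (simp add: card_Diff_subset)
  then have "c - card N \<le> card (V - N)" using assms by simp
  then obtain R where R: "R \<subseteq> V - N" "card R = c - card N" "finite R" by (rule obtain_subset_with_card_n)
  have "card (N \<union> R) = card N + card R" using R fN by (intro card_Un_disjoint) auto
  then have "card (N \<union> R) = c" using R assms by simp
  then show ?thesis using that[of "N \<union> R"] R assms by auto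
qed


lemma bad_witness:
  fixes X Y S T :: "'a set" and E G :: "('a \<times> 'a) set" and A :: "'a set" and L :: real
  assumes fin: "finite X" "finite Y" and disj: "X \<inter> Y = {}" and EXY: "E \<subseteq> X \<times> Y" and GE: "G \<subseteq> E"
    and Apart: "A \<subseteq> X \<or> A \<subseteq> Y"
    and deg: "\<forall>x\<in>A. real (par_deg S T G x) \<ge> L / 1000"
    and small: "\<not> real (card (par_neighbors S T G A)) \<ge> real (card A) * L / 2000"
    and cV: "nat \<lfloor>real (card A) * L / 2000\<rfloor> \<le> card (X \<union> Y)"
  shows "\<exists>W F. card A \<ge> 1 \<and> A \<subseteq> X \<union> Y \<and> W \<subseteq> X \<union> Y \<and> card W = nat \<lfloor>real (card A) * L / 2000\<rfloor>
           \<and> F \<subseteq> A \<times> W \<union> W \<times> A \<and> card F = nat \<lceil>real (card A) * L / 1000\<rceil> \<and> F \<subseteq> G"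
proof -
  define N where "N = par_neighbors S T G A"
  define c where "c = nat \<lfloor>real (card A) * L / 2000\<rfloor>"
  define m where "m = nat \<lceil>real (card A) * L / 1000\<rceil>"
  define P where "P = (\<lambda>x. {e \<in> G. parallel_edge S T e \<and> (fst e = x \<or> snd e = x)})"
  have a1: "card A \<ge> 1"
  proof (rule ccontr)
    assume "\<not> card A \<ge> 1"
    then have "card A = 0" by simp
    then show False using small by simp
  qed
  then have finA: "finite A" using card_ge_0_finite by force
  have AV: "A \<subseteq> X \<union> Y" using Apart by blast
  have finV: "finite (X \<union> Y)" using fin by simp
  have finE: "finite E" using EXY fin by (meson finite_SigmaI finite_subset)
  have NV: "N \<subseteq> X \<union> Y"
  proof
    fix w assume "w \<in> N"
    then obtain a e where "a \<in> A" "e \<in> G" "e = (a, w) \<or> e = (w, a)"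
      unfolding N_def par_neighbors_def by blast
    then show "w \<in> X \<union> Y" using GE EXY by auto
  qed
  have finN: "finite N" using NV finV finite_subset by blast
  have PAN: "P x \<subseteq> A \<times> N \<union> N \<times> A" if "x \<in> A" for x
  proof
    fix e assume "e \<in> P x"
    then have e: "e \<in> G" "parallel_edge S T e" "fst e = x \<or> snd e = x" unfolding P_def by auto
    obtain u v where uv: "e = (u, v)" by (cases e)
    show "e \<in> A \<times> N \<union> N \<times> A"
    proof (cases "fst e = x")
      case True
      then have "v \<in> N" unfolding N_def par_neighbors_def using e that uv by auto
      then show ?thesis using True that uv by auto
    next
      case False
      then have "snd e = x" using e by auto
      then have "u \<in> N" unfolding N_def par_neighbors_def using e that uv by auto
      then show ?thesis using \<open>snd e = x\<close> that uv by auto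
    qed
  qed
  have finP: "finite (P x)" for x
  proof -
    have "P x \<subseteq> E" unfolding P_def using GE by auto
    then show ?thesis using finE finite_subset by blast
  qed
  have disjP: "P x \<inter> P y = {}" if "x \<in> A" "y \<in> A" "x \<noteq> y" for x y
  proof (rule ccontr)
    assume "P x \<inter> P y \<noteq> {}"
    then obtain e where "e \<in> P x" "e \<in> P y" by blast
    then have "e \<in> E" "fst e = x \<or> snd e = x" "fst e = y \<or> snd e = y" unfolding P_def using GE by auto
    then have "(x \<in> X \<and> y \<in> Y) \<or> (x \<in> Y \<and> y \<in> X)" using EXY that by auto
    then show False using Apart disj that by blast
  qed
  define U where "U = (\<Union>x\<in>A. P x)"
  have cardU: "card U = (\<Sum>x\<in>A. card (P x))"
    unfolding U_def using finA finP disjP by (intro card_UN_disjoint) auto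
  have "real (card U) = (\<Sum>x\<in>A. real (card (P x)))" unfolding cardU by simp
  also have "\<dots> \<ge> (\<Sum>x\<in>A. L / 1000)"
    using deg unfolding par_deg_def P_def by (intro sum_mono) auto
  finally have "real (card U) \<ge> real (card A) * L / 1000" by simp
  then have mU: "m \<le> card U" unfolding m_def by (simp add: nat_ceiling_le_eq)
  obtain F where F: "F \<subseteq> U" "card F = m" using mU by (rule obtain_subset_with_card_n) auto
  have "real (card N) \<le> real (card A) * L / 2000" using small unfolding N_def by simp
  then have "card N \<le> c" unfolding c_def by (simp add: le_nat_floor)
  then obtain W where W: "N \<subseteq> W" "W \<subseteq> X \<union> Y" "card W = c"
    using extend_subset[OF finV NV] cV unfolding c_def by blast
  have "U \<subseteq> A \<times> N \<union> N \<times> A" unfolding U_def using PAN by blast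
  then have "F \<subseteq> A \<times> W \<union> W \<times> A" using F W by blast
  moreover have "F \<subseteq> G" using F unfolding U_def P_def by blast
  ultimately show ?thesis using a1 AV W F unfolding c_def m_def by blast
qed


lemma real_nat_floor_le: "0 \<le> (y::real) \<Longrightarrow> real (nat \<lfloor>y\<rfloor>) \<le> y"
proof -
  assume y: "0 \<le> y"
  then have "\<lfloor>y\<rfloor> \<ge> 0" by simp
  then have "real (nat \<lfloor>y\<rfloor>) = real_of_int \<lfloor>y\<rfloor>" by simp
  also have "\<dots> \<le> y" by (rule of_int_floor_le)
  finally show ?thesis .
qed

lemma nat_floor_le_real: "0 \<le> x \<Longrightarrow> x \<le> real N \<Longrightarrow> nat \<lfloor>x\<rfloor> \<le> N"
proof -
  assume "0 \<le> x" "x \<le> real N"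
  then have "real (nat \<lfloor>x\<rfloor>) \<le> real N" using real_nat_floor_le by (meson order.trans)
  then show ?thesis by simp
qed

lemma fixed_n:
  fixes X Y S T :: "nat set" and E :: "(nat \<times> nat) set" and n k :: nat
  assumes graph: "bip_regular X Y E k" and size: "card (X \<union> Y) = 2 * n"
    and n2: "n \<ge> 2" and L400: "ln (real n) \<ge> 400000"
    and kq: "real k * ln (real n) powr (1/3) \<ge> real n"
    and A1: "exp 1 * real n powr (9/10) * ln (real n) * ln (real n) powr (1/3) / real n \<le> 1"
    and A2: "8000 * exp 1 ^ 3 * real n powr (19/10) * ln (real n) * (ln (real n) powr (1/3))^2 / (real n)^2
               \<le> real n powr (-1/20)"
    and A3: "ln (real n) * ln (real n) powr (1/3) / real n \<le> 1"
    and A4: "real n powr (9/10) * ln (real n) \<le> real n"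
    and l4: "0 \<le> ln (ln (ln (ln (real n))))" "ln (ln (ln (ln (real n)))) \<le> ln (real n)"
  shows "measure_pmf.prob
      (random_subgraph E ((ln (real n) - ln (ln (ln (ln (real n))))) / real k))
      {G1. \<not> (\<forall>A. (A \<subseteq> X \<or> A \<subseteq> Y) \<longrightarrow> real (card A) \<le> real n powr 0.9 \<longrightarrow>
               (\<forall>x\<in>A. real (par_deg S T G1 x) \<ge> ln (real n) / 1000) \<longrightarrow>
               real (card (par_neighbors S T G1 A)) \<ge> real (card A) * ln (real n) / 2000)}
    \<le> real n powr (- 1)"
proof -
  define L where "L = ln (real n)"
  define q where "q = L powr (1/3)"
  define kk where "kk = real k"
  define p where "p = (ln (real n) - ln (ln (ln (ln (real n))))) / real k"
  have np: "real n > 0" "real n \<ge> 2" using n2 by auto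
  have Lpos: "L > 0" unfolding L_def using L400 by simp
  have qpos: "q > 0" unfolding q_def using Lpos by simp
  have kq': "kk * q \<ge> real n" using kq unfolding kk_def q_def L_def .
  have kpos: "kk > 0"
  proof (rule ccontr)
    assume "\<not> kk > 0"
    then have "kk = 0" unfolding kk_def by simp
    then show False using kq' np by simp
  qed
  have Lk: "L / kk \<le> L * q / real n"
  proof -
    have "L * real n \<le> L * (kk * q)" using kq' Lpos by (intro mult_left_mono) auto
    then show ?thesis using kpos np by (simp add: divide_simps mult.commute mult.left_commute)
  qed
  have inv2: "1 / kk^2 \<le> q^2 / (real n)^2"
  proof -
    have "(real n)^2 \<le> (kk * q)^2" using kq' np by (intro power_mono) auto
    then have "(real n)^2 \<le> kk^2 * q^2" by (simp add: power_mult_distrib)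
    then show ?thesis using kpos np by (simp add: divide_simps mult.commute)
  qed
  have H1: "exp 1 * real n powr (9/10) * L / kk \<le> 1"
  proof -
    have "exp 1 * real n powr (9/10) * L / kk = exp 1 * real n powr (9/10) * (L / kk)" by simp
    also have "\<dots> \<le> exp 1 * real n powr (9/10) * (L * q / real n)"
      using Lk by (intro mult_left_mono) auto
    also have "\<dots> = exp 1 * real n powr (9/10) * L * q / real n" by simp
    also have "\<dots> \<le> 1" using A1 unfolding q_def L_def .
    finally show ?thesis .
  qed
  have H2: "8000 * exp 1 ^ 3 * real n powr (19/10) * L / kk^2 \<le> real n powr (-1/20)"
  proof -
    have "8000 * exp 1 ^ 3 * real n powr (19/10) * L / kk^2 = 8000 * exp 1 ^ 3 * real n powr (19/10) * L * (1 / kk^2)" by simp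
    also have "\<dots> \<le> 8000 * exp 1 ^ 3 * real n powr (19/10) * L * (q^2 / (real n)^2)"
      using inv2 Lpos by (intro mult_left_mono) auto
    also have "\<dots> = 8000 * exp 1 ^ 3 * real n powr (19/10) * L * q^2 / (real n)^2" by simp
    also have "\<dots> \<le> real n powr (-1/20)" using A2 unfolding q_def L_def .
    finally show ?thesis .
  qed
  have p0: "0 \<le> p" unfolding p_def using l4 by simp
  have pL: "p \<le> L / kk" unfolding p_def L_def kk_def using l4 kpos unfolding kk_def
    by (intro divide_right_mono) auto
  have p1: "p \<le> 1" using pL Lk A3 unfolding q_def L_def by linarith
  have finX: "finite X" and finY: "finite Y" and disj: "X \<inter> Y = {}" and EXY: "E \<subseteq> X \<times> Y"
    using graph unfolding bip_regular_def by auto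
  define V where "V = X \<union> Y"
  have finV: "finite V" unfolding V_def using finX finY by simp
  have cardV: "card V = 2 * n" unfolding V_def using size .
  have finE: "finite E" using EXY finX finY by (meson finite_SigmaI finite_subset)
  define M where "M = random_subgraph E p"
  define K where "K = nat \<lfloor>real n powr (9/10)\<rfloor>"
  define cf where "cf = (\<lambda>a::nat. nat \<lfloor>real a * L / 2000\<rfloor>)"
  define mf where "mf = (\<lambda>a::nat. nat \<lceil>real a * L / 1000\<rceil>)"
  define Fam where "Fam = (\<lambda>a. {F. \<exists>A W. A \<subseteq> V \<and> card A = a \<and> W \<subseteq> V \<and> card W = cf a \<and>
                     F \<subseteq> A \<times> W \<union> W \<times> A \<and> card F = mf a})"
  define Bad where "Bad = {G1. \<not> (\<forall>A. (A \<subseteq> X \<or> A \<subseteq> Y) \<longrightarrow> real (card A) \<le> real n powr 0.9 \<longrightarrow>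
               (\<forall>x\<in>A. real (par_deg S T G1 x) \<ge> ln (real n) / 1000) \<longrightarrow>
               real (card (par_neighbors S T G1 A)) \<ge> real (card A) * ln (real n) / 2000)}"
  have KN: "K \<le> n"
  proof -
    have "real n powr (9/10) \<le> real n powr 1" using np by (intro powr_mono) auto
    then show ?thesis unfolding K_def using np by (intro nat_floor_le_real) auto
  qed
  have famcard: "finite (Fam a) \<and> real (card (Fam a)) \<le> real (card V choose a) * real (card V choose cf a) * (real (2*a*cf a) ^ mf a / fact (mf a))" for a
    unfolding Fam_def by (rule card_family[OF finV])
  have famfin: "finite F" if "F \<in> Fam a" for F a
  proof -
    from that obtain A W where "A \<subseteq> V" "W \<subseteq> V" "F \<subseteq> A \<times> W \<union> W \<times> A" unfolding Fam_def by blast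
    then have "F \<subseteq> V \<times> V" by blast
    then show ?thesis using finV finite_subset by blast
  qed
  have famcardF: "card F = mf a" if "F \<in> Fam a" for F a using that unfolding Fam_def by blast
  have sub: "Bad \<inter> set_pmf M \<subseteq> (\<Union>a\<in>{1..K}. \<Union>F\<in>Fam a. {G. F \<subseteq> G})"
  proof
    fix G assume G: "G \<in> Bad \<inter> set_pmf M"
    then have GE: "G \<subseteq> E" unfolding M_def random_subgraph_def by auto
    from G obtain A where A: "A \<subseteq> X \<or> A \<subseteq> Y" "real (card A) \<le> real n powr 0.9"
      "\<forall>x\<in>A. real (par_deg S T G x) \<ge> ln (real n) / 1000"
      "\<not> real (card (par_neighbors S T G A)) \<ge> real (card A) * ln (real n) / 2000"
      unfolding Bad_def by blast
    have aK: "card A \<le> K" unfolding K_def using A(2) by (intro le_nat_floor) simp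
    have cV: "nat \<lfloor>real (card A) * ln (real n) / 2000\<rfloor> \<le> card (X \<union> Y)"
    proof -
      have "real (card A) * L \<le> real n powr (9/10) * L" using A(2) Lpos by (intro mult_right_mono) auto
      also have "\<dots> \<le> real n" using A4 unfolding L_def .
      finally have "real (card A) * L / 2000 \<le> real (card (X \<union> Y))" using size np by simp
      then show ?thesis unfolding L_def using Lpos L_def by (intro nat_floor_le_real) auto
    qed
    obtain W F where WF: "card A \<ge> 1" "A \<subseteq> X \<union> Y" "W \<subseteq> X \<union> Y"
      "card W = nat \<lfloor>real (card A) * ln (real n) / 2000\<rfloor>"
      "F \<subseteq> A \<times> W \<union> W \<times> A" "card F = nat \<lceil>real (card A) * ln (real n) / 1000\<rceil>" "F \<subseteq> G"
      using bad_witness[OF finX finY disj EXY GE A(1) A(3) A(4) cV] by blast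
    have "F \<in> Fam (card A)" unfolding Fam_def cf_def mf_def V_def L_def using WF by blast
    moreover have "card A \<in> {1..K}" using WF(1) aK by simp
    ultimately show "G \<in> (\<Union>a\<in>{1..K}. \<Union>F\<in>Fam a. {G. F \<subseteq> G})" using WF(7) by blast
  qed
  have "measure_pmf.prob M Bad = measure_pmf.prob M (Bad \<inter> set_pmf M)"
    by (rule measure_Int_set_pmf[symmetric])
  also have "\<dots> \<le> measure_pmf.prob M (\<Union>a\<in>{1..K}. \<Union>F\<in>Fam a. {G. F \<subseteq> G})"
    by (rule measure_pmf.finite_measure_mono[OF sub]) simp
  also have "\<dots> \<le> (\<Sum>a\<in>{1..K}. measure_pmf.prob M (\<Union>F\<in>Fam a. {G. F \<subseteq> G}))"
    by (rule measure_pmf.finite_measure_subadditive_finite) auto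
  also have "\<dots> \<le> (\<Sum>a\<in>{1..K}. \<Sum>F\<in>Fam a. measure_pmf.prob M {G. F \<subseteq> G})"
    using famcard by (intro sum_mono measure_pmf.finite_measure_subadditive_finite) auto
  also have "\<dots> \<le> (\<Sum>a\<in>{1..K}. \<Sum>F\<in>Fam a. p ^ mf a)"
  proof (intro sum_mono)
    fix a F assume "F \<in> Fam a"
    then show "measure_pmf.prob M {G. F \<subseteq> G} \<le> p ^ mf a"
      using prob_subset_le[OF finE p0 p1 famfin[of F a]] famcardF[of F a] unfolding M_def by simp
  qed
  also have "\<dots> = (\<Sum>a\<in>{1..K}. real (card (Fam a)) * p ^ mf a)" by simp
  also have "\<dots> \<le> (\<Sum>a\<in>{1..K}. real n powr (-3))"
  proof (intro sum_mono)
    fix a assume a: "a \<in> {1..K}"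
    have "real (card (Fam a)) * p ^ mf a \<le>
          real (card V choose a) * real (card V choose cf a) * (real (2*a*cf a) ^ mf a / fact (mf a)) * p ^ mf a"
      using famcard[of a] p0 by (intro mult_right_mono) auto
    also have "\<dots> \<le> real n powr (-3)"
      unfolding cardV cf_def mf_def
    proof (rule term_bound[OF n2 L_def L400[folded L_def] _ _ p0 pL kpos H1 H2])
      show "1 \<le> a" using a by simp
      have "real a \<le> real K" using a by simp
      also have "\<dots> \<le> real n powr (9/10)" unfolding K_def by (rule real_nat_floor_le) simp
      finally show "real a \<le> real n powr (9/10)" .
    qed
    finally show "real (card (Fam a)) * p ^ mf a \<le> real n powr (-3)" .
  qed
  also have "\<dots> = real K * real n powr (-3)" by simp
  also have "\<dots> \<le> real n * real n powr (-3)" using KN by (intro mult_right_mono) auto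
  also have "\<dots> = real n powr (-2)"
  proof -
    have "real n * real n powr (-3) = real n powr 1 * real n powr (-3)" using np by simp
    also have "\<dots> = real n powr (1 + -3)" by (rule powr_add[symmetric])
    finally show ?thesis by simp
  qed
  also have "\<dots> \<le> real n powr (-1)" using np by (intro powr_mono) auto
  finally show ?thesis unfolding Bad_def M_def p_def .
qed

theorem lemma3p6:
  fixes X Y :: "nat \<Rightarrow> nat set"
    and E :: "nat \<Rightarrow> (nat \<times> nat) set"
    and S T :: "nat \<Rightarrow> nat set"
    and k :: "nat \<Rightarrow> nat"
  assumes delta: "filterlim (\<lambda>n. (real (k n) / real n) * ln (real n) powr (1/3)) at_top sequentially"
    and graph: "\<And>n. bip_regular (X n) (Y n) (E n) (k n)"
    and size: "\<And>n. card (X n \<union> Y n) = 2 * n"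
    and cut: "\<And>n. S n \<subseteq> X n \<and> T n \<subseteq> Y n"
  shows "\<exists>c>0. \<forall>\<^sub>F n in sequentially.
    measure_pmf.prob
      (random_subgraph (E n) ((ln (real n) - ln (ln (ln (ln (real n))))) / real (k n)))
      {G1. \<not> (\<forall>A. (A \<subseteq> X n \<or> A \<subseteq> Y n) \<longrightarrow> real (card A) \<le> real n powr 0.9 \<longrightarrow>
               (\<forall>x\<in>A. real (par_deg (S n) (T n) G1 x) \<ge> ln (real n) / 1000) \<longrightarrow>
               real (card (par_neighbors (S n) (T n) G1 A)) \<ge> real (card A) * ln (real n) / 2000)}
    \<le> real n powr (- c)"
proof (intro exI[of _ 1] conjI)
  show "(0::real) < 1" by simp
  have ev0: "\<forall>\<^sub>F n in sequentially. 1 \<le> real (k n) / real n * ln (real n) powr (1/3)"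
    using delta unfolding filterlim_at_top by blast
  have ev1: "\<forall>\<^sub>F n in sequentially. real n > 0" by real_asymp
  have evk: "\<forall>\<^sub>F n in sequentially. real (k n) * ln (real n) powr (1/3) \<ge> real n"
    using ev0 ev1
  proof eventually_elim
    case (elim n)
    then show ?case by (simp add: divide_simps mult.commute mult.left_commute)
  qed
  have e2: "\<forall>\<^sub>F n in sequentially. n \<ge> (2::nat)" by (rule eventually_ge_at_top)
  have e3: "\<forall>\<^sub>F n in sequentially. ln (real n) \<ge> 400000" by real_asymp
  have e4: "\<forall>\<^sub>F n in sequentially. exp 1 * real n powr (9/10) * ln (real n) * ln (real n) powr (1/3) / real n \<le> 1"
    by real_asymp
  have e5: "\<forall>\<^sub>F n in sequentially. 8000 * exp 1 ^ 3 * real n powr (19/10) * ln (real n) * (ln (real n) powr (1/3))^2 / (real n)^2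
               \<le> real n powr (-1/20)" by real_asymp
  have e6: "\<forall>\<^sub>F n in sequentially. ln (real n) * ln (real n) powr (1/3) / real n \<le> 1" by real_asymp
  have e7: "\<forall>\<^sub>F n in sequentially. real n powr (9/10) * ln (real n) \<le> real n" by real_asymp
  have e8: "\<forall>\<^sub>F n in sequentially. 0 \<le> ln (ln (ln (ln (real n))))" by real_asymp
  have e9: "\<forall>\<^sub>F n in sequentially. ln (ln (ln (ln (real n)))) \<le> ln (real n)" by real_asymp
  show "\<forall>\<^sub>F n in sequentially.
    measure_pmf.prob
      (random_subgraph (E n) ((ln (real n) - ln (ln (ln (ln (real n))))) / real (k n)))
      {G1. \<not> (\<forall>A. (A \<subseteq> X n \<or> A \<subseteq> Y n) \<longrightarrow> real (card A) \<le> real n powr 0.9 \<longrightarrow>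
               (\<forall>x\<in>A. real (par_deg (S n) (T n) G1 x) \<ge> ln (real n) / 1000) \<longrightarrow>
               real (card (par_neighbors (S n) (T n) G1 A)) \<ge> real (card A) * ln (real n) / 2000)}
    \<le> real n powr (- 1)"
    using evk e2 e3 e4 e5 e6 e7 e8 e9
  proof eventually_elim
    case (elim n)
    show ?case by (rule fixed_n[OF graph size elim(2) elim(3) elim(1) elim(4) elim(5) elim(6) elim(7) elim(8) elim(9)])
  qed
qed

end
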